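(* Let $H$ and $U$ be Hilbert spaces, let $A\colon D(A)\subset H\to H$ be the generator of a strongly continuous contraction semigroup $\{e^{tA}\}_{t\ge0}$ on $H$, and let $B\colon U\to H$ be a bounded linear operator with adjoint $B^*\colon H\to U$. Let $\alpha\colon[0,\infty)\to[0,1]$ be measurable, let $z_0\in H$, and let $z(\cdot)\in C([0,\infty);H)$ be the mild solution of $\dot z = Az-\alpha(t)BB^*z$, $z(0)=z_0$, i.e. $$z(t)=e^{tA}z_0-\int_0^t e^{(t-s)A}\alpha(s)BB^*z(s)\,ds,\qquad t\ge0.$$ Set $V(z)=\tfrac12\|z\|_H^2$. Then for all $0\le a\le b<\infty$, $$V(z(b))-V(z(a))\le -\bigl(2+2(b-a)^2\|B\|^4\bigr)^{-1}\int_0^{b-a}\alpha(t+a)\,\|B^*e^{tA}z(a)\|_U^2\,dt.$$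
   Context: The mild solution exists and is unique for every measurable $\alpha$ with values in $[0,1]$ and every $z_0\in H$. *)

theory Defs
  imports "HOL-Analysis.Analysis"
begin

text \<open>A strongly continuous (C0) contraction semigroup on a real normed space,
  given by its family of bounded operators T t = e^{tA}, t \<ge> 0.\<close>
definition C0_contraction_semigroup :: "(real \<Rightarrow> ('h::real_normed_vector \<Rightarrow>\<^sub>L 'h)) \<Rightarrow> bool" where
  "C0_contraction_semigroup T \<longleftrightarrow>
     T 0 = id_blinfun \<and>
     (\<forall>t s. 0 \<le> t \<longrightarrow> 0 \<le> s \<longrightarrow> T (t + s) = T t o\<^sub>L T s) \<and>
     (\<forall>x. continuous_on {0..} (\<lambda>t. blinfun_apply (T t) x)) \<and>
     (\<forall>t. 0 \<le> t \<longrightarrow> norm (T t) \<le> 1)"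

definition is_adjoint :: "('u::real_inner \<Rightarrow>\<^sub>L 'h::real_inner) \<Rightarrow> ('h \<Rightarrow>\<^sub>L 'u) \<Rightarrow> bool" where
  "is_adjoint B Bs \<longleftrightarrow> (\<forall>u h. inner (blinfun_apply B u) h = inner u (blinfun_apply Bs h))"

definition mild_solution ::
  "(real \<Rightarrow> ('h::{real_inner,complete_space} \<Rightarrow>\<^sub>L 'h)) \<Rightarrow> ('u::{real_inner,complete_space} \<Rightarrow>\<^sub>L 'h)
    \<Rightarrow> ('h \<Rightarrow>\<^sub>L 'u) \<Rightarrow> (real \<Rightarrow> real) \<Rightarrow> 'h \<Rightarrow> (real \<Rightarrow> 'h) \<Rightarrow> bool" where
  "mild_solution T B Bs \<alpha> z0 z \<longleftrightarrow>
     continuous_on {0..} z \<and>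
     (\<forall>t. 0 \<le> t \<longrightarrow>
        ((\<lambda>s. blinfun_apply (T (t - s)) (\<alpha> s *\<^sub>R blinfun_apply B (blinfun_apply Bs (z s))))
           has_integral (blinfun_apply (T t) z0 - z t)) {0..t})"

definition V :: "'h::real_normed_vector \<Rightarrow> real" where
  "V x = (1/2) * (norm x)\<^sup>2"

end

theory Submission imports Defs begin

lemma alpha_meas:
  fixes \<alpha> :: "real \<Rightarrow> real"
  assumes "\<alpha> \<in> borel_measurable (restrict_space lborel {0..})" "0 \<le> x"
  shows "\<alpha> \<in> borel_measurable (lebesgue_on {x..y})"
proof -
  have 1: "\<alpha> \<in> borel_measurable (restrict_space lborel {x..y})"
    by (rule measurable_restrict_mono[OF assms(1)]) (use assms(2) in auto)
  have 2: "sets (restrict_space lborel {x..y}) \<subseteq> sets (lebesgue_on {x..y})"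
    by (rule mono_restrict_space) (rule subsetI, rule sets_completionI_sets)
  show ?thesis by (rule borel_measurable_subalgebra[OF 2 _ 1]) simp
qed

lemma meas_bdd_integrable:
  fixes f :: "real \<Rightarrow> real"
  assumes "f \<in> borel_measurable (lebesgue_on {x..y})" "\<And>s. s \<in> {x..y} \<Longrightarrow> \<bar>f s\<bar> \<le> K"
  shows "f integrable_on {x..y}"
proof -
  have "(\<lambda>s. if s \<in> {x..y} then f s else 0) \<in> borel_measurable lebesgue"
    by (rule borel_measurable_if_I) (auto simp: assms)
  then have "(\<lambda>s. if s \<in> {x..y} then f s else 0) integrable_on cbox x y"
    by (rule measurable_bounded_lemma[where g="\<lambda>_. K"]) (auto simp: assms)
  then have "(\<lambda>s. if s \<in> {x..y} then f s else 0) integrable_on {x..y}" by simp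
  then show ?thesis
    by (rule integrable_eq) auto
qed
lemma meas_cont_integrable:
  fixes m c :: "real \<Rightarrow> real"
  assumes m: "m \<in> borel_measurable (lebesgue_on {x..y})" and mb: "\<And>s. s \<in> {x..y} \<Longrightarrow> \<bar>m s\<bar> \<le> 1"
    and c: "continuous_on {x..y} c"
  shows "(\<lambda>s. m s * c s) integrable_on {x..y}"
proof -
  have "compact (c ` {x..y})" by (rule compact_continuous_image[OF c]) auto
  then have "bounded (c ` {x..y})" by (rule compact_imp_bounded)
  then obtain K where K0: "\<forall>v\<in>c ` {x..y}. norm v \<le> K" unfolding bounded_iff by blast
  then have K: "\<And>v. v \<in> c ` {x..y} \<Longrightarrow> norm v \<le> K" by blast
  have cm: "c \<in> borel_measurable (lebesgue_on {x..y})"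
    by (rule continuous_imp_measurable_on_sets_lebesgue[OF c]) auto
  show ?thesis
  proof (rule meas_bdd_integrable)
    show "(\<lambda>s. m s * c s) \<in> borel_measurable (lebesgue_on {x..y})"
      using m cm by (rule borel_measurable_times)
    fix s assume s: "s \<in> {x..y}"
    have "\<bar>m s * c s\<bar> = \<bar>m s\<bar> * \<bar>c s\<bar>" by (simp add: abs_mult)
    also have "\<dots> \<le> 1 * K"
      using mb[OF s] K[of "c s"] s by (intro mult_mono) auto
    finally show "\<bar>m s * c s\<bar> \<le> K" by simp
  qed
qed

lemma aux_sq: "(d::real) > 0 \<Longrightarrow> A^2/d = 2*(A/d)*A - d*(A/d)^2"
  by (simp add: field_simps power2_eq_square)

lemma cauchy_schwarz_int:
  fixes R :: "real \<Rightarrow> real"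
  assumes "R integrable_on {x..y}" "(\<lambda>s. (R s)^2) integrable_on {x..y}" "x \<le> y"
  shows "(integral {x..y} R)^2 \<le> (y - x) * integral {x..y} (\<lambda>s. (R s)^2)"
proof (cases "x = y")
  case True then show ?thesis by simp
next
  case False
  with assms have xy: "x < y" by simp
  define m where "m = integral {x..y} R / (y - x)"
  have "((\<lambda>s. (R s)^2 - 2 * m * R s + m^2) has_integral
      (integral {x..y} (\<lambda>s. (R s)^2) - 2 * m * integral {x..y} R + (y - x) * m^2)) {x..y}"
    using assms xy
    by (intro has_integral_add has_integral_diff has_integral_mult_right integrable_integral)
       (use has_integral_const_real[of "m^2" x y] xy in auto)
  moreover have "\<And>s. (R s)^2 - 2 * m * R s + m^2 = (R s - m)^2" by (simp add: power2_eq_square algebra_simps)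
  ultimately have "((\<lambda>s. (R s - m)^2) has_integral
      (integral {x..y} (\<lambda>s. (R s)^2) - 2 * m * integral {x..y} R + (y - x) * m^2)) {x..y}" by simp
  then have "0 \<le> integral {x..y} (\<lambda>s. (R s)^2) - 2 * m * integral {x..y} R + (y - x) * m^2"
    by (rule has_integral_nonneg) auto
  moreover have "(integral {x..y} R)^2 / (y - x) = 2 * m * integral {x..y} R - (y - x) * m^2"
    using aux_sq[of "y - x" "integral {x..y} R"] xy unfolding m_def by simp
  ultimately have "(integral {x..y} R)^2 / (y - x) \<le> integral {x..y} (\<lambda>s. (R s)^2)" by linarith
  then show ?thesis using xy by (simp add: field_simps)
qed


context
  fixes T :: "real \<Rightarrow> ('h::{real_inner,complete_space} \<Rightarrow>\<^sub>L 'h)"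
    and B :: "'u::{real_inner,complete_space} \<Rightarrow>\<^sub>L 'h"
    and Bs :: "'h \<Rightarrow>\<^sub>L 'u"
    and \<alpha> :: "real \<Rightarrow> real"
    and z0 :: 'h
    and z :: "real \<Rightarrow> 'h"
  assumes sg: "C0_contraction_semigroup T"
    and adj: "is_adjoint B Bs"
    and am: "\<alpha> \<in> borel_measurable (restrict_space lborel {0..})"
    and ab: "\<forall>t. 0 \<le> t \<longrightarrow> 0 \<le> \<alpha> t \<and> \<alpha> t \<le> 1"
    and ms: "mild_solution T B Bs \<alpha> z0 z"
begin

lemma T0: "blinfun_apply (T 0) x = x"
  using sg by (simp add: C0_contraction_semigroup_def)

lemma Tadd: "0 \<le> t \<Longrightarrow> 0 \<le> s \<Longrightarrow> blinfun_apply (T (t + s)) x = blinfun_apply (T t) (blinfun_apply (T s) x)"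
  using sg by (simp add: C0_contraction_semigroup_def)

lemma Tcont: "continuous_on {0..} (\<lambda>t. blinfun_apply (T t) x)"
  using sg by (simp add: C0_contraction_semigroup_def)

lemma Tnorm: "0 \<le> t \<Longrightarrow> norm (blinfun_apply (T t) x) \<le> norm x"
proof -
  assume t: "0 \<le> t"
  have "norm (T t) \<le> 1" using sg t by (simp add: C0_contraction_semigroup_def)
  then have "norm (T t) * norm x \<le> 1 * norm x" by (intro mult_right_mono) auto
  then show ?thesis using norm_blinfun[of "T t" x] by simp
qed

lemma adj_sq: "inner x (blinfun_apply B (blinfun_apply Bs x)) = (norm (blinfun_apply Bs x))^2"
  using adj by (simp add: is_adjoint_def inner_commute power2_norm_eq_inner)

lemma Bs_bound: "norm (blinfun_apply Bs h) \<le> norm B * norm h"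
proof (cases "norm (blinfun_apply Bs h) = 0")
  case True then show ?thesis by simp
next
  case False
  have "(norm (blinfun_apply Bs h))^2 = inner h (blinfun_apply B (blinfun_apply Bs h))"
    by (simp add: adj_sq)
  also have "\<dots> \<le> norm h * norm (blinfun_apply B (blinfun_apply Bs h))"
    by (rule norm_cauchy_schwarz[THEN order_trans]) simp
  also have "\<dots> \<le> norm h * (norm B * norm (blinfun_apply Bs h))"
    by (intro mult_left_mono norm_blinfun) auto
  finally have "norm (blinfun_apply Bs h) * norm (blinfun_apply Bs h) \<le> (norm B * norm h) * norm (blinfun_apply Bs h)"
    by (simp add: power2_eq_square algebra_simps)
  then show ?thesis using False by (simp add: mult_le_cancel_right)
qed

lemma mildI: "0 \<le> t \<Longrightarrow> ((\<lambda>s. blinfun_apply (T (t - s)) (\<alpha> s *\<^sub>R blinfun_apply B (blinfun_apply Bs (z s))))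
           has_integral (blinfun_apply (T t) z0 - z t)) {0..t}"
  using ms by (simp add: mild_solution_def)

lemma zcont: "continuous_on {0..} z"
  using ms by (simp add: mild_solution_def)

lemma joint: "continuous_on ({0..} \<times> UNIV) (\<lambda>p. blinfun_apply (T (fst p)) (snd p))"
  unfolding continuous_on_iff
proof (intro ballI allI impI)
  fix p :: "real \<times> 'h" and e :: real
  assume p: "p \<in> {0..} \<times> UNIV" and e: "0 < e"
  obtain r0 x0 where p0: "p = (r0, x0)" by (cases p)
  with p have r0: "0 \<le> r0" by auto
  have "\<exists>d1>0. \<forall>r\<in>{0..}. dist r r0 < d1 \<longrightarrow>
      dist (blinfun_apply (T r) x0) (blinfun_apply (T r0) x0) < e/2"
  proof -
    have ct: "\<forall>\<epsilon>>0. \<exists>\<delta>>0. \<forall>x'\<in>{0..}. dist x' r0 < \<delta> \<longrightarrow>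
        dist (blinfun_apply (T x') x0) (blinfun_apply (T r0) x0) < \<epsilon>"
      using Tcont[of x0] r0 unfolding continuous_on_iff by simp
    show ?thesis by (rule ct[rule_format]) (use e in simp)
  qed
  then obtain d1 where d1: "d1 > 0" and hd10: "\<forall>r\<in>{0..}. dist r r0 < d1 \<longrightarrow>
      dist (blinfun_apply (T r) x0) (blinfun_apply (T r0) x0) < e/2" by blast
  have hd1: "\<And>r. r \<in> {0..} \<Longrightarrow> dist r r0 < d1 \<Longrightarrow>
      dist (blinfun_apply (T r) x0) (blinfun_apply (T r0) x0) < e/2" using hd10 by blast
  show "\<exists>d>0. \<forall>q\<in>{0..} \<times> UNIV. dist q p < d \<longrightarrow>
      dist (blinfun_apply (T (fst q)) (snd q)) (blinfun_apply (T (fst p)) (snd p)) < e"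
  proof (intro exI[of _ "min d1 (e/2)"] conjI ballI impI)
    show "0 < min d1 (e/2)" using d1 e by simp
    fix q :: "real \<times> 'h" assume q: "q \<in> {0..} \<times> UNIV" and dq: "dist q p < min d1 (e/2)"
    obtain r x where q0: "q = (r, x)" by (cases q)
    with q have r: "0 \<le> r" by auto
    have "dist r r0 \<le> dist q p" "dist x x0 \<le> dist q p"
      unfolding q0 p0 by (simp_all add: dist_Pair_Pair real_sqrt_sum_squares_ge1 real_sqrt_sum_squares_ge2)
    with dq have dr: "dist r r0 < d1" and dx: "dist x x0 < e/2" by auto
    have "dist (blinfun_apply (T r) x) (blinfun_apply (T r0) x0)
        \<le> dist (blinfun_apply (T r) x) (blinfun_apply (T r) x0) + dist (blinfun_apply (T r) x0) (blinfun_apply (T r0) x0)"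
      by (rule dist_triangle)
    also have "dist (blinfun_apply (T r) x) (blinfun_apply (T r) x0) \<le> dist x x0"
      using Tnorm[OF r, of "x - x0"] by (simp add: dist_norm blinfun.diff_right)
    finally show "dist (blinfun_apply (T (fst q)) (snd q)) (blinfun_apply (T (fst p)) (snd p)) < e"
      using hd1[of r] dr dx r unfolding q0 p0 by auto
  qed
qed

lemma step:
  assumes t: "0 \<le> t" and h: "0 \<le> h"
  shows "((\<lambda>s. inner v (blinfun_apply (T (t + h - s)) (\<alpha> s *\<^sub>R blinfun_apply B (blinfun_apply Bs (z s)))))
     has_integral (inner v (blinfun_apply (T h) (z t) - z (t + h)))) {t..t+h}"
proof -
  define F where "F = (\<lambda>s. blinfun_apply (T (t + h - s)) (\<alpha> s *\<^sub>R blinfun_apply B (blinfun_apply Bs (z s))))"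
  define G where "G = (\<lambda>s. blinfun_apply (T (t - s)) (\<alpha> s *\<^sub>R blinfun_apply B (blinfun_apply Bs (z s))))"
  have hu: "(F has_integral (blinfun_apply (T (t + h)) z0 - z (t + h))) {0..t+h}"
    unfolding F_def using mildI[of "t + h"] t h by simp
  have ht: "(G has_integral (blinfun_apply (T t) z0 - z t)) {0..t}"
    unfolding G_def using mildI[OF t] .
  have hT: "((blinfun_apply (T h) \<circ> G) has_integral blinfun_apply (T h) (blinfun_apply (T t) z0 - z t)) {0..t}"
    by (rule has_integral_linear[OF ht blinfun.bounded_linear_right])
  have heq: "\<And>s. s \<in> {0..t} \<Longrightarrow> (blinfun_apply (T h) \<circ> G) s = F s"
  proof -
    fix s assume s: "s \<in> {0..t}"
    have e: "t + h - s = h + (t - s)" by simp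
    show "(blinfun_apply (T h) \<circ> G) s = F s"
      unfolding F_def G_def e using Tadd[of h "t - s"] s h by simp
  qed
  have h1: "(F has_integral blinfun_apply (T h) (blinfun_apply (T t) z0 - z t)) {0..t}"
    by (rule has_integral_eq[OF heq hT])
  define f where "f = (\<lambda>s. inner v (F s))"
  have fu: "(f has_integral inner v (blinfun_apply (T (t + h)) z0 - z (t + h))) {0..t+h}"
    using has_integral_linear[OF hu bounded_linear_inner_right[of v]] unfolding f_def o_def .
  have f1: "(f has_integral inner v (blinfun_apply (T h) (blinfun_apply (T t) z0 - z t))) {0..t}"
    using has_integral_linear[OF h1 bounded_linear_inner_right[of v]] unfolding f_def o_def .
  have Fi: "f integrable_on {t..t+h}"
    by (rule integrable_subinterval_real[OF has_integral_integrable[OF fu]]) (use t h in auto)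
  have "(f has_integral (inner v (blinfun_apply (T h) (blinfun_apply (T t) z0 - z t)) + integral {t..t+h} f)) {0..t+h}"
    by (rule has_integral_combine[OF _ _ f1 integrable_integral[OF Fi]]) (use t h in auto)
  from has_integral_unique[OF fu this]
  have eq: "inner v (blinfun_apply (T (t + h)) z0 - z (t + h)) = inner v (blinfun_apply (T h) (blinfun_apply (T t) z0 - z t)) + integral {t..t+h} f" .
  have "blinfun_apply (T (t + h)) z0 = blinfun_apply (T h) (blinfun_apply (T t) z0)"
    using Tadd[OF h t, of z0] by (simp add: add.commute)
  with eq have "integral {t..t+h} f = inner v (blinfun_apply (T h) (z t) - z (t + h))"
    by (simp add: blinfun.diff_right inner_diff_right algebra_simps)
  with integrable_integral[OF Fi] show ?thesis unfolding f_def F_def by simp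
qed

lemma alpha_lm: "0 \<le> x \<Longrightarrow> \<alpha> \<in> borel_measurable (lebesgue_on {x..y})"
  by (rule alpha_meas[OF am])

lemma ac_int:
  assumes "0 \<le> x" "continuous_on {x..y} c"
  shows "(\<lambda>s. \<alpha> s * c s) integrable_on {x..y}"
  by (rule meas_cont_integrable[OF alpha_lm[OF assms(1)] _ assms(2)]) (use ab assms(1) in auto)

lemma aac_int:
  assumes "0 \<le> x" "continuous_on {x..y} c"
  shows "(\<lambda>s. (\<alpha> s * \<alpha> s) * c s) integrable_on {x..y}"
proof (rule meas_cont_integrable[OF _ _ assms(2)])
  show "(\<lambda>s. \<alpha> s * \<alpha> s) \<in> borel_measurable (lebesgue_on {x..y})"
    using alpha_lm[OF assms(1)] by (intro borel_measurable_times)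
  fix s assume "s \<in> {x..y}"
  then have "0 \<le> \<alpha> s" "\<alpha> s \<le> 1" using ab assms(1) by auto
  then show "\<bar>\<alpha> s * \<alpha> s\<bar> \<le> 1" by (simp add: abs_mult mult_le_one)
qed

lemma zcont': "0 \<le> x \<Longrightarrow> continuous_on {x..y} z"
  by (rule continuous_on_subset[OF zcont]) auto

lemma Pcont: "0 \<le> x \<Longrightarrow> continuous_on {x..y} (\<lambda>s. (norm (blinfun_apply Bs (z s)))^2)"
  by (intro continuous_intros zcont')

lemma local_est:
  assumes a: "0 \<le> a" and e: "0 < e"
  shows "\<exists>d>0. \<forall>t h. a \<le> t \<longrightarrow> 0 \<le> h \<longrightarrow> h < d \<longrightarrow> t + h \<le> b \<longrightarrow>
     (norm (z (t + h)))^2 - (norm (z t))^2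
       + 2 * integral {t..t+h} (\<lambda>s. \<alpha> s * (norm (blinfun_apply Bs (z s)))^2) \<le> 2 * h * e"
proof -
  define g where "g = (\<lambda>s. blinfun_apply B (blinfun_apply Bs (z s)))"
  define Q where "Q = (\<lambda>p. inner (z (fst p)) (blinfun_apply (T (max 0 (fst p - snd p))) (g (snd p))))"
  define S where "S = {a..b} \<times> {a..b}"
  have gc: "continuous_on {a..b} g" unfolding g_def by (intro continuous_intros zcont' a)
  have c1: "continuous_on S (\<lambda>p. z (fst p))"
    unfolding S_def by (rule continuous_on_compose2[OF zcont'[OF a, of b] continuous_on_fst]) auto
  have c2: "continuous_on S (\<lambda>p. (max 0 (fst p - snd p), g (snd p)))"
    unfolding S_def by (intro continuous_intros continuous_on_compose2[OF gc continuous_on_snd]) auto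
  have c3: "continuous_on S (\<lambda>p. blinfun_apply (T (max 0 (fst p - snd p))) (g (snd p)))"
  proof -
    have "continuous_on S ((\<lambda>q. blinfun_apply (T (fst q)) (snd q)) \<circ> (\<lambda>p. (max 0 (fst p - snd p), g (snd p))))"
      by (rule continuous_on_compose[OF c2 continuous_on_subset[OF joint]]) auto
    then show ?thesis by (simp add: o_def)
  qed
  have cQ: "continuous_on S Q" unfolding Q_def by (rule continuous_on_inner[OF c1 c3])
  have "compact S" unfolding S_def by (intro compact_Times compact_Icc)
  with cQ have "uniformly_continuous_on S Q" by (rule compact_uniformly_continuous)
  then obtain d where d: "d > 0" and hd0: "\<forall>p\<in>S. \<forall>p'\<in>S. dist p' p < d \<longrightarrow> dist (Q p') (Q p) < e"
    unfolding uniformly_continuous_on_def using e by blast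
  have hd: "\<And>p p'. p \<in> S \<Longrightarrow> p' \<in> S \<Longrightarrow> dist p' p < d \<Longrightarrow> dist (Q p') (Q p) < e"
    using hd0 by blast
  show ?thesis
  proof (intro exI[of _ d] conjI allI impI d)
    fix t h assume t: "a \<le> t" and h: "0 \<le> h" and hd': "h < d" and tb: "t + h \<le> b"
    define u where "u = t + h"
    define F where "F = (\<lambda>s. blinfun_apply (T (t + h - s)) (\<alpha> s *\<^sub>R blinfun_apply B (blinfun_apply Bs (z s))))"
    define J where "J = blinfun_apply (T h) (z t) - z u"
    define P where "P = (\<lambda>s. \<alpha> s * (norm (blinfun_apply Bs (z s)))^2)"
    have t0: "0 \<le> t" using a t by simp
    have wk: "((\<lambda>s. inner (z u) (F s)) has_integral inner (z u) J) {t..u}"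
      unfolding F_def J_def u_def by (rule step[OF t0 h])
    have "(norm (z u + J))^2 \<le> (norm (z t))^2"
      unfolding J_def using Tnorm[OF h, of "z t"] by simp
    moreover have "(norm (z u + J))^2 = (norm (z u))^2 + 2 * inner (z u) J + (norm J)^2"
      by (simp add: power2_norm_eq_inner inner_add_left inner_add_right inner_commute)
    ultimately have E1: "(norm (z u))^2 - (norm (z t))^2 \<le> - 2 * inner (z u) J"
      by (smt (verit) zero_le_power2)
    have Pi: "P integrable_on {t..u}" unfolding P_def by (rule ac_int[OF t0 Pcont[OF t0]])
    have diffint: "((\<lambda>s. P s - inner (z u) (F s)) has_integral (integral {t..u} P - inner (z u) J)) {t..u}"
      by (rule has_integral_diff[OF integrable_integral[OF Pi] wk])
    have pw: "P s - inner (z u) (F s) \<le> e" if s: "s \<in> {t..u}" for s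
    proof -
      have s0: "0 \<le> s" using s t0 by auto
      have al: "0 \<le> \<alpha> s" "\<alpha> s \<le> 1" using ab s0 by auto
      have "inner (z u) (F s) = \<alpha> s * Q (u, s)"
        unfolding F_def Q_def g_def using s
        by (simp add: blinfun.scaleR_right max_def u_def)
      moreover have "P s = \<alpha> s * Q (s, s)"
        unfolding P_def Q_def g_def by (simp add: T0 adj_sq)
      moreover have "dist (Q (u, s)) (Q (s, s)) < e"
      proof (rule hd)
        show "(s, s) \<in> S" "(u, s) \<in> S" unfolding S_def using s t tb u_def by auto
        show "dist (u, s) (s, s) < d" using s hd' unfolding u_def by (simp add: dist_Pair_Pair dist_real_def)
      qed
      ultimately have "P s - inner (z u) (F s) = \<alpha> s * (Q (s, s) - Q (u, s))" "Q (s, s) - Q (u, s) \<le> e"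
        by (auto simp: algebra_simps dist_real_def)
      moreover have "\<alpha> s * (Q (s, s) - Q (u, s)) \<le> \<alpha> s * e" using al calculation(2) by (intro mult_left_mono)
      moreover have "\<alpha> s * e \<le> 1 * e" using al e by (intro mult_right_mono) auto
      ultimately show ?thesis by simp
    qed
    have ci: "((\<lambda>s. e) has_integral (u - t) * e) {t..u}"
      using has_integral_const_real[of e t u] h unfolding u_def by simp
    have "integral {t..u} P - inner (z u) J \<le> (u - t) * e"
      by (rule has_integral_le[OF diffint ci pw])
    then have E2: "integral {t..u} P - inner (z u) J \<le> h * e" using h unfolding u_def by simp
    from E1 E2 show "(norm (z (t + h)))^2 - (norm (z t))^2
       + 2 * integral {t..t+h} (\<lambda>s. \<alpha> s * (norm (blinfun_apply Bs (z s)))^2) \<le> 2 * h * e"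
      unfolding u_def P_def by linarith
  qed
qed

lemma dissip_eps:
  assumes a: "0 \<le> a" and ab': "a \<le> b" and e: "0 < e"
  shows "(norm (z b))^2 - (norm (z a))^2
       + 2 * integral {a..b} (\<lambda>s. \<alpha> s * (norm (blinfun_apply Bs (z s)))^2) \<le> 2 * (b - a) * e"
proof -
  define P where "P = (\<lambda>s. \<alpha> s * (norm (blinfun_apply Bs (z s)))^2)"
  obtain d where d: "d > 0" and hd: "\<And>t h. a \<le> t \<Longrightarrow> 0 \<le> h \<Longrightarrow> h < d \<Longrightarrow> t + h \<le> b \<Longrightarrow>
     (norm (z (t + h)))^2 - (norm (z t))^2 + 2 * integral {t..t+h} P \<le> 2 * h * e"
    using local_est[OF a e, of b] unfolding P_def by blast
  obtain n :: nat where n: "(b - a) / d < real n" using reals_Archimedean2 by blast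
  define N where "N = Suc n"
  have N0: "real N > 0" unfolding N_def by simp
  have "(b - a) / d < real N" using n unfolding N_def by simp
  then have hN: "(b - a) / real N < d" using d N0 by (simp add: field_simps)
  define h where "h = (b - a) / real N"
  have h0: "0 \<le> h" unfolding h_def using ab' N0 by simp
  have hb: "a + real N * h = b" unfolding h_def using N0 by simp
  have claim: "k \<le> N \<Longrightarrow> (norm (z (a + real k * h)))^2 - (norm (z a))^2 + 2 * integral {a..a + real k * h} P \<le> 2 * (real k * h) * e" for k
  proof (induction k)
    case 0 then show ?case by simp
  next
    case (Suc k)
    define t where "t = a + real k * h"
    have kle: "real k * h \<le> real N * h" using Suc.prems h0 by (intro mult_right_mono) auto
    have kle2: "real (Suc k) * h \<le> real N * h" using Suc.prems h0 by (intro mult_right_mono) auto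
    have t_ge: "a \<le> t" unfolding t_def using h0 by simp
    have th: "t + h = a + real (Suc k) * h" unfolding t_def by (simp add: algebra_simps)
    have tb: "t + h \<le> b" using th kle2 hb by linarith
    have IH: "(norm (z t))^2 - (norm (z a))^2 + 2 * integral {a..t} P \<le> 2 * (real k * h) * e"
      using Suc.IH Suc.prems unfolding t_def by simp
    have loc: "(norm (z (t + h)))^2 - (norm (z t))^2 + 2 * integral {t..t+h} P \<le> 2 * h * e"
      using hd[OF t_ge h0 hN[folded h_def] tb] .
    have Pi: "P integrable_on {a..t+h}" unfolding P_def by (rule ac_int[OF a Pcont[OF a]])
    have comb: "integral {a..t} P + integral {t..t+h} P = integral {a..t+h} P"
      by (rule Henstock_Kurzweil_Integration.integral_combine[OF t_ge _ Pi]) (use h0 in simp)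
    have "(norm (z (t + h)))^2 - (norm (z a))^2 + 2 * integral {a..t+h} P \<le> 2 * (real k * h) * e + 2 * h * e"
      using IH loc comb by linarith
    also have "\<dots> = 2 * (real (Suc k) * h) * e" by (simp add: algebra_simps)
    finally show ?case unfolding th .
  qed
  have Nh: "real N * h = b - a" using hb by simp
  from claim[of N] show ?thesis unfolding P_def Nh hb by simp
qed

lemma dissip:
  assumes a: "0 \<le> a" and ab': "a \<le> b"
  shows "(norm (z b))^2 - (norm (z a))^2
       + 2 * integral {a..b} (\<lambda>s. \<alpha> s * (norm (blinfun_apply Bs (z s)))^2) \<le> 0"
proof (rule ccontr)
  define L where "L = (norm (z b))^2 - (norm (z a))^2
       + 2 * integral {a..b} (\<lambda>s. \<alpha> s * (norm (blinfun_apply Bs (z s)))^2)"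
  assume "\<not> ?thesis"
  then have L: "L > 0" unfolding L_def by simp
  define e where "e = L / (4 * (b - a) + 1)"
  have den: "4 * (b - a) + 1 > 0" using ab' by simp
  have e0: "e > 0" unfolding e_def using L den by simp
  have "L \<le> 2 * (b - a) * e" unfolding L_def by (rule dissip_eps[OF a ab' e0])
  also have "\<dots> \<le> L / 2" unfolding e_def using L den ab' by (simp add: field_simps)
  finally show False using L by simp
qed

lemma pointwise:
  assumes a: "0 \<le> a" and s: "a \<le> s"
  shows "(norm (blinfun_apply Bs (blinfun_apply (T (s - a)) (z a))))^2 \<le>
     2 * (norm (blinfun_apply Bs (z s)))^2 + 2 * (norm B)^4 * ((s - a) *
       integral {a..s} (\<lambda>r. \<alpha> r * (norm (blinfun_apply Bs (z r)))^2))"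
proof -
  define J where "J = blinfun_apply (T (s - a)) (z a) - z s"
  define w where "w = blinfun_apply Bs J"
  define F where "F = (\<lambda>r. blinfun_apply (T (s - r)) (\<alpha> r *\<^sub>R blinfun_apply B (blinfun_apply Bs (z r))))"
  define R where "R = (\<lambda>r. \<alpha> r * norm (blinfun_apply Bs (z r)))"
  define P where "P = (\<lambda>r. \<alpha> r * (norm (blinfun_apply Bs (z r)))^2)"
  have sa: "0 \<le> s - a" using s by simp
  have wk: "((\<lambda>r. inner (blinfun_apply B w) (F r)) has_integral inner (blinfun_apply B w) J) {a..s}"
    using step[OF a sa, of "blinfun_apply B w"] unfolding F_def J_def by simp
  have wJ: "inner (blinfun_apply B w) J = (norm w)^2"
    using adj unfolding is_adjoint_def w_def by (simp add: power2_norm_eq_inner)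
  have Ri: "R integrable_on {a..s}" unfolding R_def
    by (rule ac_int[OF a]) (intro continuous_intros zcont'[OF a])
  have bnd: "inner (blinfun_apply B w) (F r) \<le> (norm w * (norm B)^2) * R r" if r: "r \<in> {a..s}" for r
  proof -
    have r0: "0 \<le> r" "0 \<le> s - r" using r a by auto
    have al: "0 \<le> \<alpha> r" using ab r0 by auto
    have "inner (blinfun_apply B w) (F r) = inner w (blinfun_apply Bs (F r))"
      using adj unfolding is_adjoint_def by simp
    also have "\<dots> \<le> norm w * norm (blinfun_apply Bs (F r))"
      by (rule norm_cauchy_schwarz[THEN order_trans]) simp
    also have "\<dots> \<le> norm w * (norm B * norm (F r))"
      by (intro mult_left_mono Bs_bound) auto
    also have "norm (F r) \<le> \<alpha> r * (norm B * norm (blinfun_apply Bs (z r)))"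
    proof -
      have "norm (F r) \<le> norm (\<alpha> r *\<^sub>R blinfun_apply B (blinfun_apply Bs (z r)))"
        unfolding F_def by (rule Tnorm) (use r0 in simp)
      also have "\<dots> = \<alpha> r * norm (blinfun_apply B (blinfun_apply Bs (z r)))" using al by simp
      also have "\<dots> \<le> \<alpha> r * (norm B * norm (blinfun_apply Bs (z r)))"
        using al by (intro mult_left_mono norm_blinfun)
      finally show ?thesis .
    qed
    then have "norm w * (norm B * norm (F r)) \<le> norm w * (norm B * (\<alpha> r * (norm B * norm (blinfun_apply Bs (z r)))))"
      by (intro mult_left_mono) auto
    also have "\<dots> = (norm w * (norm B)^2) * R r" unfolding R_def by (simp add: power2_eq_square algebra_simps)
    finally show ?thesis .
  qed
  have "(norm w)^2 \<le> (norm w * (norm B)^2) * integral {a..s} R"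
    using has_integral_le[OF wk has_integral_mult_right[OF integrable_integral[OF Ri]] bnd] wJ by simp
  moreover have R0: "0 \<le> integral {a..s} R"
    by (rule integral_nonneg[OF Ri]) (use ab a in \<open>auto simp: R_def\<close>)
  ultimately have wb: "norm w \<le> (norm B)^2 * integral {a..s} R"
  proof (cases "norm w = 0")
    case True then show ?thesis using R0 by simp
  next
    case False
    assume "(norm w)^2 \<le> (norm w * (norm B)^2) * integral {a..s} R"
    then have "norm w * norm w \<le> norm w * ((norm B)^2 * integral {a..s} R)"
      by (simp add: power2_eq_square algebra_simps)
    then show ?thesis using False by (simp add: mult_le_cancel_left)
  qed
  have "blinfun_apply Bs (blinfun_apply (T (s - a)) (z a)) = blinfun_apply Bs (z s) + w"
    unfolding w_def J_def by (simp add: blinfun.diff_right)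
  then have n1: "norm (blinfun_apply Bs (blinfun_apply (T (s - a)) (z a))) \<le> norm (blinfun_apply Bs (z s)) + (norm B)^2 * integral {a..s} R"
    using norm_triangle_ineq[of "blinfun_apply Bs (z s)" w] wb by simp
  have R2i: "(\<lambda>r. (R r)^2) integrable_on {a..s}"
  proof -
    have "(\<lambda>r. (\<alpha> r * \<alpha> r) * (norm (blinfun_apply Bs (z r)))^2) integrable_on {a..s}"
      by (rule aac_int[OF a Pcont[OF a]])
    then show ?thesis unfolding R_def by (simp add: power2_eq_square algebra_simps)
  qed
  have Pi: "P integrable_on {a..s}" unfolding P_def by (rule ac_int[OF a Pcont[OF a]])
  have R2P: "integral {a..s} (\<lambda>r. (R r)^2) \<le> integral {a..s} P"
  proof (rule integral_le[OF R2i Pi])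
    fix r assume "r \<in> {a..s}"
    then have "0 \<le> \<alpha> r" "\<alpha> r \<le> 1" using ab a by auto
    then have "\<alpha> r * \<alpha> r \<le> \<alpha> r" by (simp add: mult_le_one mult_left_le)
    then have "(\<alpha> r * \<alpha> r) * (norm (blinfun_apply Bs (z r)))^2 \<le> \<alpha> r * (norm (blinfun_apply Bs (z r)))^2"
      by (intro mult_right_mono) auto
    then show "(R r)^2 \<le> P r" unfolding R_def P_def by (simp add: power2_eq_square algebra_simps)
  qed
  have CS: "(integral {a..s} R)^2 \<le> (s - a) * integral {a..s} P"
    using cauchy_schwarz_int[OF Ri R2i s] R2P mult_left_mono[OF R2P sa] by linarith
  define X where "X = norm (blinfun_apply Bs (z s))"
  define Y where "Y = (norm B)^2 * integral {a..s} R"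
  have Y0: "0 \<le> Y" unfolding Y_def using R0 by simp
  have "(norm (blinfun_apply Bs (blinfun_apply (T (s - a)) (z a))))^2 \<le> (X + Y)^2"
    using n1 unfolding X_def Y_def by (intro power_mono) auto
  also have "\<dots> \<le> 2 * X^2 + 2 * Y^2" by (smt (verit) zero_le_power2 power2_sum power2_diff)
  also have "Y^2 = (norm B)^4 * (integral {a..s} R)^2" unfolding Y_def by (simp add: power_mult_distrib power2_eq_square power4_eq_xxxx)
  also have "\<dots> \<le> (norm B)^4 * ((s - a) * integral {a..s} P)" using CS by (intro mult_left_mono) auto
  finally show ?thesis unfolding X_def P_def by simp
qed

lemma Kbound:
  assumes a: "0 \<le> a" and ab': "a \<le> b"
  shows "integral {0..b - a} (\<lambda>t. \<alpha> (t + a) * (norm (blinfun_apply Bs (blinfun_apply (T t) (z a))))\<^sup>2)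
    \<le> (2 + 2 * (b - a)\<^sup>2 * (norm B) ^ 4) * integral {a..b} (\<lambda>r. \<alpha> r * (norm (blinfun_apply Bs (z r)))^2)"
proof -
  define P where "P = (\<lambda>r. \<alpha> r * (norm (blinfun_apply Bs (z r)))^2)"
  define I where "I = integral {a..b} P"
  define f where "f = (\<lambda>s. \<alpha> s * (norm (blinfun_apply Bs (blinfun_apply (T (s - a)) (z a))))\<^sup>2)"
  define C where "C = 2 * (norm B)^4 * ((b - a) * I)"
  have Pi: "P integrable_on {a..b}" unfolding P_def by (rule ac_int[OF a Pcont[OF a]])
  have P0: "\<And>r. r \<in> {a..b} \<Longrightarrow> 0 \<le> P r" unfolding P_def using ab a by auto
  have I0: "0 \<le> I" unfolding I_def by (rule integral_nonneg[OF Pi P0])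
  have C0: "0 \<le> C" unfolding C_def using I0 ab' by simp
  have cT: "continuous_on {a..b} (\<lambda>s. blinfun_apply (T (s - a)) (z a))"
    by (rule continuous_on_compose2[OF Tcont[of "z a"]]) (auto intro!: continuous_intros)
  have fi: "f integrable_on {a..b}" unfolding f_def
    by (rule ac_int[OF a]) (intro continuous_intros cT)
  have rhs: "((\<lambda>s. 2 * P s + C) has_integral (2 * I + (b - a) * C)) {a..b}"
    unfolding I_def
    by (intro has_integral_add has_integral_mult_right integrable_integral[OF Pi])
       (use has_integral_const_real[of C a b] ab' in simp)
  have pw: "f s \<le> 2 * P s + C" if s: "s \<in> {a..b}" for s
  proof -
    have s1: "a \<le> s" "s \<le> b" using s by auto
    have al: "0 \<le> \<alpha> s" "\<alpha> s \<le> 1" using ab a s1 by auto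
    have Pis: "P integrable_on {a..b}" by (rule Pi)
    have "integral {a..s} P + integral {s..b} P = I"
      unfolding I_def by (rule Henstock_Kurzweil_Integration.integral_combine[OF s1 Pi])
    moreover have "0 \<le> integral {s..b} P"
      by (rule integral_nonneg[OF integrable_subinterval_real[OF Pi]]) (use s1 P0 in auto)
    ultimately have Is: "integral {a..s} P \<le> I" by linarith
    have "(s - a) * integral {a..s} P \<le> (b - a) * I"
      using s1 Is integral_nonneg[OF integrable_subinterval_real[OF Pi], of a s] P0
      by (intro mult_mono) auto
    then have "(norm (blinfun_apply Bs (blinfun_apply (T (s - a)) (z a))))^2 \<le>
        2 * (norm (blinfun_apply Bs (z s)))^2 + C"
      using pointwise[OF a s1(1)] unfolding C_def P_def
      by (smt (verit) mult_left_mono zero_le_power norm_ge_zero)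
    then have "f s \<le> \<alpha> s * (2 * (norm (blinfun_apply Bs (z s)))^2 + C)"
      unfolding f_def using al by (intro mult_left_mono) auto
    also have "\<dots> = 2 * P s + \<alpha> s * C" unfolding P_def by (simp add: algebra_simps)
    also have "\<alpha> s * C \<le> 1 * C" using al C0 by (intro mult_right_mono) auto
    finally show ?thesis by simp
  qed
  have "integral {a..b} f \<le> 2 * I + (b - a) * C"
    by (rule has_integral_le[OF integrable_integral[OF fi] rhs pw])
  also have "\<dots> = (2 + 2 * (b - a)\<^sup>2 * (norm B) ^ 4) * I" unfolding C_def by (simp add: power2_eq_square algebra_simps)
  finally have "integral {a..b} f \<le> (2 + 2 * (b - a)\<^sup>2 * (norm B) ^ 4) * I" .
  moreover have "integral {0..b - a} (f \<circ> (+) a) = integral {0 + a..b - a + a} f"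
    by (rule integral_shift_Icc_real)
  moreover have "f \<circ> (+) a = (\<lambda>t. \<alpha> (t + a) * (norm (blinfun_apply Bs (blinfun_apply (T t) (z a))))\<^sup>2)"
    unfolding f_def by (auto simp: add.commute)
  ultimately show ?thesis unfolding I_def P_def by simp
qed

end



theorem lemma2p1:
  fixes T :: "real \<Rightarrow> ('h::{real_inner,complete_space} \<Rightarrow>\<^sub>L 'h)"
    and B :: "'u::{real_inner,complete_space} \<Rightarrow>\<^sub>L 'h"
    and Bs :: "'h \<Rightarrow>\<^sub>L 'u"
    and \<alpha> :: "real \<Rightarrow> real"
    and z0 :: 'h
    and z :: "real \<Rightarrow> 'h"
    and a b :: real
  assumes "C0_contraction_semigroup T"
    and "is_adjoint B Bs"
    and "\<alpha> \<in> borel_measurable (restrict_space lborel {0..})"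
    and "\<forall>t. 0 \<le> t \<longrightarrow> 0 \<le> \<alpha> t \<and> \<alpha> t \<le> 1"
    and "mild_solution T B Bs \<alpha> z0 z"
    and "0 \<le> a" and "a \<le> b"
  shows "V (z b) - V (z a) \<le>
    - (1 / (2 + 2 * (b - a)\<^sup>2 * (norm B) ^ 4)) *
      integral {0..b - a} (\<lambda>t. \<alpha> (t + a) * (norm (blinfun_apply Bs (blinfun_apply (T t) (z a))))\<^sup>2)"
proof -
  define I where "I = integral {a..b} (\<lambda>r. \<alpha> r * (norm (blinfun_apply Bs (z r)))^2)"
  define K where "K = integral {0..b - a} (\<lambda>t. \<alpha> (t + a) * (norm (blinfun_apply Bs (blinfun_apply (T t) (z a))))\<^sup>2)"
  define c where "c = 2 + 2 * (b - a)\<^sup>2 * (norm B) ^ 4"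
  have c0: "0 < c" unfolding c_def by (simp add: add_pos_nonneg)
  have D: "(norm (z b))^2 - (norm (z a))^2 + 2 * I \<le> 0"
    unfolding I_def by (rule dissip[OF assms])
  have Kb: "K \<le> c * I"
    unfolding K_def c_def I_def by (rule Kbound[OF assms])
  then have "K / c \<le> I" using c0 by (simp add: divide_le_eq mult.commute)
  moreover have "V (z b) - V (z a) \<le> - I" using D unfolding V_def by simp
  ultimately have "V (z b) - V (z a) \<le> - (K / c)" by linarith
  then show ?thesis unfolding K_def c_def by simp
qed

end
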